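(* Let $n=2(k+1)$ for an integer $k\ge 2$, and let $\sigma_n$ be the multiset consisting of $k$ copies of $1$, one copy of $\frac{-1}{2k+1}$, and $k+1$ copies of $\frac{1-2k}{2k+1}$. Then $\sum_{\lambda\in\sigma_n}\lambda=0$ (counted with multiplicity), and $\sigma_n$ is not realizable.
   Context: A multiset $\sigma=\{\lambda_1,\dots,\lambda_n\}$ of complex numbers is realizable if there exists an $n\times n$ matrix with all entries real and nonnegative whose eigenvalues, counted with algebraic multiplicity, are exactly $\lambda_1,\dots,\lambda_n$. *)

theory Defs
  imports "Jordan_Normal_Form.Jordan_Normal_Form" "HOL-Library.Multiset"
begin

definition realizable :: "complex multiset \<Rightarrow> bool" where
  "realizable \<sigma> \<longleftrightarrow>
     (\<exists>A :: real mat. A \<in> carrier_mat (size \<sigma>) (size \<sigma>) \<and>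
        (\<forall>i < size \<sigma>. \<forall>j < size \<sigma>. A $$ (i, j) \<ge> 0) \<and>
        char_poly (map_mat complex_of_real A) = (\<Prod>x\<in>#\<sigma>. [:- x, 1:]))"

definition sigma_n :: "nat \<Rightarrow> complex multiset" where
  "sigma_n k = replicate_mset k 1
      + {# complex_of_real (-1 / (2 * real k + 1)) #}
      + replicate_mset (k + 1) (complex_of_real ((1 - 2 * real k) / (2 * real k + 1)))"

end

theory Submission
  imports Defs "Jordan_Normal_Form.Spectral_Radius"
begin


definition mv :: "real mat \<Rightarrow> nat \<Rightarrow> (nat \<Rightarrow> real) \<Rightarrow> (nat \<Rightarrow> real)" where
  "mv B n v = (\<lambda>j. \<Sum>l<n. B $$ (j,l) * v l)"

definition nonneg_mat :: "real mat \<Rightarrow> nat \<Rightarrow> bool" where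
  "nonneg_mat B n \<longleftrightarrow> (\<forall>i<n. \<forall>j<n. B $$ (i,j) \<ge> 0)"

definition conn :: "real mat \<Rightarrow> nat \<Rightarrow> bool" where
  "conn B n \<longleftrightarrow> (\<forall>S. S \<subseteq> {..<n} \<longrightarrow> S \<noteq> {} \<longrightarrow> S \<noteq> {..<n} \<longrightarrow>
     (\<exists>j<n. \<exists>l\<in>S. j \<notin> S \<and> B $$ (j,l) > 0))"

lemma mv_lin: "mv B n (\<lambda>j. a * u j + b * v j) = (\<lambda>j. a * mv B n u j + b * mv B n v j)"
  unfolding mv_def by (auto simp: algebra_simps sum.distrib sum_distrib_left)

lemma mv_add: "mv B n (\<lambda>j. u j + v j) = (\<lambda>j. mv B n u j + mv B n v j)"
  using mv_lin[of B n 1 u 1 v] by simp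

lemma mv_diff: "mv B n (\<lambda>j. u j - v j) = (\<lambda>j. mv B n u j - mv B n v j)"
  using mv_lin[of B n 1 u "-1" v] by simp

lemma mv_scale: "mv B n (\<lambda>j. a * u j) = (\<lambda>j. a * mv B n u j)"
  using mv_lin[of B n a u 0 u] by simp

lemma mv_mono: assumes "nonneg_mat B n" "\<And>j. j < n \<Longrightarrow> u j \<le> v j" "j < n"
  shows "mv B n u j \<le> mv B n v j"
  unfolding mv_def
  by (rule sum_mono) (use assms in \<open>auto simp: nonneg_mat_def intro: mult_left_mono\<close>)

lemma mv_nonneg: assumes "nonneg_mat B n" "\<And>j. j < n \<Longrightarrow> 0 \<le> v j" "j < n"
  shows "0 \<le> mv B n v j"
  using mv_mono[OF assms(1), of "\<lambda>_. 0" v j] assms by (simp add: mv_def)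

lemma mv_pow: assumes B: "B \<in> carrier_mat n n" and j: "j < n"
  shows "((mv B n) ^^ m) v j = (\<Sum>l<n. (B ^\<^sub>m m) $$ (j,l) * v l)"
  using j
proof (induction m arbitrary: v j)
  case 0
  have "(\<Sum>l<n. (B ^\<^sub>m 0) $$ (j,l) * v l) = (\<Sum>l<n. (if j = l then v l else 0))"
    by (rule sum.cong) (use B 0 in auto)
  also have "\<dots> = v j" using 0 by simp
  finally show ?case by simp
next
  case (Suc m)
  have "((mv B n) ^^ Suc m) v j = ((mv B n) ^^ m) (mv B n v) j"
    by (simp only: funpow_Suc_right comp_def)
  also have "\<dots> = (\<Sum>l<n. (B ^\<^sub>m m) $$ (j,l) * mv B n v l)"
    by (rule Suc.IH[OF Suc.prems])
  also have "\<dots> = (\<Sum>l<n. (B ^\<^sub>m m) $$ (j,l) * (\<Sum>i<n. B $$ (l,i) * v i))"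
    by (simp only: mv_def)
  also have "\<dots> = (\<Sum>l<n. \<Sum>i<n. (B ^\<^sub>m m) $$ (j,l) * B $$ (l,i) * v i)"
    by (simp add: sum_distrib_left mult.assoc)
  also have "\<dots> = (\<Sum>i<n. \<Sum>l<n. (B ^\<^sub>m m) $$ (j,l) * B $$ (l,i) * v i)"
    by (rule sum.swap)
  also have "\<dots> = (\<Sum>i<n. (\<Sum>l<n. (B ^\<^sub>m m) $$ (j,l) * B $$ (l,i)) * v i)"
    by (simp add: sum_distrib_right)
  also have "\<dots> = (\<Sum>i<n. (B ^\<^sub>m Suc m) $$ (j,i) * v i)"
  proof (rule sum.cong[OF refl])
    fix i assume i: "i \<in> {..<n}"
    have "(B ^\<^sub>m Suc m) $$ (j,i) = row (B ^\<^sub>m m) j \<bullet> col B i"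
      using B i Suc.prems by (simp add: index_mult_mat)
    also have "\<dots> = (\<Sum>l<n. (B ^\<^sub>m m) $$ (j,l) * B $$ (l,i))"
      unfolding scalar_prod_def using B i Suc.prems
      by (auto simp: atLeast0LessThan intro!: sum.cong)
    finally show "(\<Sum>l<n. (B ^\<^sub>m m) $$ (j,l) * B $$ (l,i)) * v i = (B ^\<^sub>m Suc m) $$ (j,i) * v i"
      by simp
  qed
  finally show ?case .
qed

lemma growth_contra:
  fixes c K c1 c2 :: real
  assumes c: "c > 1" and bnd: "\<And>m. c ^ m \<le> K * (c1 + c2 * real m ^ d)"
  shows False
proof -
  from poly_exp_bound[of "1/c" "Suc d"] c obtain P where
    P: "\<And>x. (1/c) ^ x * real x ^ Suc d \<le> P" by auto
  define C where "C = \<bar>K\<bar> * (\<bar>c1\<bar> + \<bar>c2\<bar>)"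
  have C0: "C \<ge> 0" unfolding C_def by simp
  define m where "m = nat \<lceil>2 * C * \<bar>P\<bar>\<rceil> + 1"
  have m1: "m \<ge> 1" unfolding m_def by simp
  have mbig: "real m > 2 * C * \<bar>P\<bar>" unfolding m_def by linarith
  have md: "real m ^ d \<ge> 1" using m1 by simp
  have "c ^ m \<le> K * (c1 + c2 * real m ^ d)" by (rule bnd)
  also have "\<dots> \<le> \<bar>K\<bar> * (\<bar>c1\<bar> + \<bar>c2\<bar> * real m ^ d)"
  proof -
    have "K * (c1 + c2 * real m ^ d) \<le> \<bar>K * (c1 + c2 * real m ^ d)\<bar>" by simp
    also have "\<dots> = \<bar>K\<bar> * \<bar>c1 + c2 * real m ^ d\<bar>" by (simp add: abs_mult)
    also have "\<dots> \<le> \<bar>K\<bar> * (\<bar>c1\<bar> + \<bar>c2\<bar> * real m ^ d)"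
      by (rule mult_left_mono) (auto simp: abs_mult intro: order.trans[OF abs_triangle_ineq])
    finally show ?thesis .
  qed
  also have "\<dots> \<le> \<bar>K\<bar> * (\<bar>c1\<bar> * real m ^ d + \<bar>c2\<bar> * real m ^ d)"
  proof -
    have "\<bar>c1\<bar> \<le> \<bar>c1\<bar> * real m ^ d" using mult_left_mono[OF md, of "\<bar>c1\<bar>"] by simp
    thus ?thesis by (intro mult_left_mono) auto
  qed
  also have "\<dots> = C * real m ^ d" unfolding C_def by (simp add: algebra_simps)
  finally have cm: "c ^ m \<le> C * real m ^ d" .
  have "(1/c) ^ m * real m ^ Suc d \<le> P" by (rule P)
  hence "real m ^ Suc d \<le> P * c ^ m" using c by (simp add: field_simps power_divide)
  also have "\<dots> \<le> \<bar>P\<bar> * c ^ m" using c by (intro mult_right_mono) auto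
  also have "\<dots> \<le> \<bar>P\<bar> * (C * real m ^ d)" by (rule mult_left_mono[OF cm]) simp
  finally have "real m * real m ^ d \<le> (\<bar>P\<bar> * C) * real m ^ d" by (simp add: algebra_simps)
  hence "real m \<le> \<bar>P\<bar> * C" using md m1 by (simp add: mult_le_cancel_right)
  moreover have "2 * C * \<bar>P\<bar> = 2 * (\<bar>P\<bar> * C)" by (simp add: mult.commute)
  moreover have "0 \<le> \<bar>P\<bar> * C" using C0 by simp
  ultimately show False using mbig by linarith
qed



definition phi :: "real mat \<Rightarrow> nat \<Rightarrow> (nat \<Rightarrow> real) \<Rightarrow> (nat \<Rightarrow> real)" where
  "phi B n v = (\<lambda>j. v j + mv B n v j)"

lemma phi_mv1: "phi B n (mv B n v) = mv B n (phi B n v)"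
  unfolding phi_def mv_add by simp

lemma phi_diff1: "phi B n (\<lambda>j. u j - v j) = (\<lambda>j. phi B n u j - phi B n v j)"
  unfolding phi_def mv_diff by auto

lemma phi_mv_comm: "(phi B n ^^ k) (mv B n v) = mv B n ((phi B n ^^ k) v)"
proof (induction k)
  case (Suc k)
  show ?case by (simp only: funpow.simps(2) comp_def Suc phi_mv1)
qed simp

lemma phi_diff: "(phi B n ^^ k) (\<lambda>j. u j - v j) = (\<lambda>j. (phi B n ^^ k) u j - (phi B n ^^ k) v j)"
proof (induction k)
  case (Suc k)
  show ?case by (simp only: funpow.simps(2) comp_def Suc phi_diff1)
qed simp

lemma phi_nonneg: assumes "nonneg_mat B n" "\<And>j. j < n \<Longrightarrow> 0 \<le> v j"
  shows "j < n \<Longrightarrow> 0 \<le> (phi B n ^^ k) v j"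
proof (induction k arbitrary: j)
  case (Suc k)
  have "0 \<le> mv B n ((phi B n ^^ k) v) j" by (rule mv_nonneg[OF assms(1) Suc.IH Suc.prems])
  moreover have "(phi B n ^^ Suc k) v j = (phi B n ^^ k) v j + mv B n ((phi B n ^^ k) v) j"
    by (simp only: funpow.simps(2) comp_def phi_def[of B n "(phi B n ^^ k) v"])
  ultimately show ?case using Suc.IH[OF Suc.prems] by simp
qed (use assms in simp)

lemma supp_grow:
  assumes B: "nonneg_mat B n" and C: "conn B n" and v0: "\<And>j. j < n \<Longrightarrow> 0 \<le> v j"
    and i: "i < n" "v i > 0"
  shows "card {j\<in>{..<n}. (phi B n ^^ k) v j > 0} \<ge> min n (k+1)"
proof (induction k)
  case 0
  have "{i} \<subseteq> {j\<in>{..<n}. (phi B n ^^ 0) v j > 0}" using i by auto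
  from card_mono[OF _ this] show ?case by simp
next
  case (Suc k)
  define u where "u = (phi B n ^^ k) v"
  have u0: "\<And>j. j < n \<Longrightarrow> 0 \<le> u j" unfolding u_def by (rule phi_nonneg[OF B v0])
  define S where "S = {j\<in>{..<n}. u j > 0}"
  have IH: "card S \<ge> min n (k+1)" using Suc unfolding S_def u_def by simp
  have step: "(phi B n ^^ Suc k) v = phi B n u" unfolding u_def by simp
  have ge: "\<And>j. j < n \<Longrightarrow> phi B n u j \<ge> u j"
    using mv_nonneg[OF B u0] by (simp add: phi_def)
  define S' where "S' = {j\<in>{..<n}. phi B n u j > 0}"
  have SS': "S \<subseteq> S'" unfolding S_def S'_def using ge by force
  have finS': "finite S'" unfolding S'_def by simp
  show ?case
  proof (cases "S = {..<n}")
    case True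
    hence "S' = {..<n}" using SS' unfolding S'_def by auto
    thus ?thesis unfolding step S'_def[symmetric] by simp
  next
    case False
    have "S \<noteq> {}" using IH i by (cases n) auto
    from C[unfolded conn_def, rule_format, of S] False this
    obtain j l where j: "j < n" and l: "l \<in> S" and jS: "j \<notin> S" and Bjl: "B $$ (j,l) > 0"
      unfolding S_def by auto
    have ln: "l < n" and ul: "u l > 0" using l unfolding S_def by auto
    have "B $$ (j,l) * u l \<le> mv B n u j"
      unfolding mv_def
      by (rule member_le_sum[of l "{..<n}" "\<lambda>l. B $$ (j,l) * u l"])
        (use ln B u0 j in \<open>auto simp: nonneg_mat_def\<close>)
    moreover have "B $$ (j,l) * u l > 0" using Bjl ul by simp
    ultimately have "phi B n u j > 0" using u0[OF j] by (simp add: phi_def)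
    hence "insert j S \<subseteq> S'" using SS' j unfolding S'_def by auto
    from card_mono[OF finS' this] jS have "card S' \<ge> card S + 1"
      using finite_subset[OF SS' finS'] by simp
    thus ?thesis unfolding step S'_def[symmetric] using IH by linarith
  qed
qed

lemma phi_pos:
  assumes B: "nonneg_mat B n" and C: "conn B n" and v0: "\<And>j. j < n \<Longrightarrow> 0 \<le> v j"
    and i: "i < n" "v i > 0" and j: "j < n"
  shows "(phi B n ^^ (n - 1)) v j > 0"
proof -
  have "card {j\<in>{..<n}. (phi B n ^^ (n-1)) v j > 0} \<ge> n"
    using supp_grow[of B n v, OF B C v0 i, of "n-1"] i by simp
  moreover have "{j\<in>{..<n}. (phi B n ^^ (n-1)) v j > 0} \<subseteq> {..<n}" by auto
  ultimately have "{j\<in>{..<n}. (phi B n ^^ (n-1)) v j > 0} = {..<n}"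
    by (metis (no_types, lifting) card_lessThan card_seteq finite_lessThan)
  thus ?thesis using j by auto
qed

lemma G_lemma:
  assumes Bc: "B \<in> carrier_mat n n" and B: "nonneg_mat B n" and C: "conn B n"
    and bnd: "\<And>m i j. i < n \<Longrightarrow> j < n \<Longrightarrow> \<bar>(B ^\<^sub>m m) $$ (i,j)\<bar> \<le> c1 + c2 * real m ^ d"
    and w0: "\<And>j. j < n \<Longrightarrow> 0 \<le> w j" and i: "i < n" "w i > 0"
    and sup: "\<And>j. j < n \<Longrightarrow> mv B n w j \<ge> w j"
    and j: "j < n"
  shows "mv B n w j = w j"
proof (rule ccontr)
  assume "mv B n w j \<noteq> w j"
  with sup[OF j] have j0: "mv B n w j > w j" by simp
  define dd where "dd = (\<lambda>j. mv B n w j - w j)"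
  have d0: "\<And>j. j < n \<Longrightarrow> 0 \<le> dd j" using sup unfolding dd_def by (simp)
  have dj: "dd j > 0" using j0 unfolding dd_def by simp
  define y where "y = (phi B n ^^ (n-1)) w"
  define z where "z = (phi B n ^^ (n-1)) dd"
  have ypos: "\<And>l. l < n \<Longrightarrow> y l > 0" unfolding y_def by (rule phi_pos[of B n w, OF B C w0 i])
  have zpos: "\<And>l. l < n \<Longrightarrow> z l > 0" unfolding z_def by (rule phi_pos[of B n dd, OF B C d0 j dj])
  have yz: "mv B n y = (\<lambda>l. y l + z l)"
  proof -
    have "z = (\<lambda>l. (phi B n ^^ (n-1)) (mv B n w) l - y l)"
      unfolding z_def dd_def y_def by (rule phi_diff)
    thus ?thesis unfolding phi_mv_comm y_def by auto
  qed
  have n0: "n > 0" using i by simp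
  define e where "e = Min ((\<lambda>l. z l / y l) ` {..<n})"
  have e0: "e > 0" unfolding e_def using n0 zpos ypos
    by (subst Min_gr_iff) auto
  have ey: "\<And>l. l < n \<Longrightarrow> mv B n y l \<ge> (1 + e) * y l"
  proof -
    fix l assume l: "l < n"
    have "e \<le> z l / y l" unfolding e_def using l by (intro Min_le) auto
    hence "e * y l \<le> z l" using ypos[OF l] by (simp add: field_simps)
    thus "mv B n y l \<ge> (1 + e) * y l" unfolding yz by (simp add: algebra_simps)
  qed
  have iter: "\<And>m l. l < n \<Longrightarrow> ((mv B n) ^^ m) y l \<ge> (1 + e) ^ m * y l"
  proof -
    fix m
    show "\<And>l. l < n \<Longrightarrow> ((mv B n) ^^ m) y l \<ge> (1 + e) ^ m * y l"
    proof (induction m)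
      case (Suc m)
      have "(1 + e) ^ Suc m * y l = (1 + e) ^ m * ((1 + e) * y l)" by simp
      also have "\<dots> \<le> (1 + e) ^ m * mv B n y l"
        using ey[OF Suc.prems] e0 by (intro mult_left_mono) auto
      also have "\<dots> = mv B n (\<lambda>l. (1 + e) ^ m * y l) l" by (simp add: mv_scale)
      also have "\<dots> \<le> mv B n (((mv B n) ^^ m) y) l"
        by (rule mv_mono[OF B Suc.IH Suc.prems])
      finally show ?case by simp
    qed simp
  qed
  define Y where "Y = (\<Sum>l<n. y l)"
  have "\<And>m. (1 + e) ^ m \<le> (Y / y 0) * (c1 + c2 * real m ^ d)"
  proof -
    fix m
    have "(1 + e) ^ m * y 0 \<le> ((mv B n) ^^ m) y 0" by (rule iter[OF n0])
    also have "\<dots> = (\<Sum>l<n. (B ^\<^sub>m m) $$ (0,l) * y l)" by (rule mv_pow[OF Bc n0])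
    also have "\<dots> \<le> (\<Sum>l<n. (c1 + c2 * real m ^ d) * y l)"
    proof (rule sum_mono)
      fix l assume l: "l \<in> {..<n}"
      have "(B ^\<^sub>m m) $$ (0,l) \<le> c1 + c2 * real m ^ d"
        using bnd[OF n0, of l m] l by auto
      thus "(B ^\<^sub>m m) $$ (0,l) * y l \<le> (c1 + c2 * real m ^ d) * y l"
        using ypos[of l] l by (intro mult_right_mono) auto
    qed
    also have "\<dots> = (c1 + c2 * real m ^ d) * Y" unfolding Y_def by (simp add: sum_distrib_left)
    finally have "(1 + e) ^ m * y 0 \<le> (c1 + c2 * real m ^ d) * Y" .
    thus "(1 + e) ^ m \<le> (Y / y 0) * (c1 + c2 * real m ^ d)"
      using ypos[OF n0] by (simp add: field_simps)
  qed
  from growth_contra[of "1 + e", OF _ this] e0 show False by simp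
qed



lemma eigvec_fun:
  assumes M: "(M :: real mat) \<in> carrier_mat n n" and r: "poly (char_poly M) \<mu> = 0"
  shows "\<exists>z. (\<exists>i<n. z i \<noteq> 0) \<and> (\<forall>j<n. mv M n z j = \<mu> * z j)"
proof -
  from r eigenvalue_root_char_poly[OF M] have "eigenvalue M \<mu>" by simp
  then obtain v where ev: "eigenvector M v \<mu>" unfolding eigenvalue_def by auto
  hence v: "v \<in> carrier_vec n" "v \<noteq> 0\<^sub>v n" "M *\<^sub>v v = \<mu> \<cdot>\<^sub>v v"
    unfolding eigenvector_def using M by auto
  define z where "z = (\<lambda>i. if i < n then v $ i else 0)"
  have "\<exists>i<n. z i \<noteq> 0"
  proof (rule ccontr)
    assume "\<not> ?thesis"
    hence "v = 0\<^sub>v n" using v(1) unfolding z_def by (intro eq_vecI) auto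
    with v(2) show False by simp
  qed
  moreover have "\<forall>j<n. mv M n z j = \<mu> * z j"
  proof (intro allI impI)
    fix j assume j: "j < n"
    have "\<mu> * z j = (M *\<^sub>v v) $ j" using v(1,3) j unfolding z_def by simp
    also have "\<dots> = row M j \<bullet> v" using M j by simp
    also have "\<dots> = mv M n z j" unfolding scalar_prod_def mv_def z_def using M v(1) j
      by (auto simp: atLeast0LessThan intro!: sum.cong)
    finally show "mv M n z j = \<mu> * z j" by simp
  qed
  ultimately show ?thesis by blast
qed

lemma abs_sup:
  assumes M: "nonneg_mat M n" and ev: "mv M n z j = \<mu> * z j" and mu: "\<mu> \<ge> 1" and j: "j < n"
  shows "mv M n (\<lambda>l. \<bar>z l\<bar>) j \<ge> \<bar>z j\<bar>"
proof -
  have "\<bar>z j\<bar> \<le> \<mu> * \<bar>z j\<bar>" using mu mult_right_mono[OF mu, of "\<bar>z j\<bar>"] by simp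
  also have "\<dots> = \<bar>mv M n z j\<bar>" using ev mu by (simp add: abs_mult)
  also have "\<dots> \<le> (\<Sum>l<n. \<bar>M $$ (j,l) * z l\<bar>)" unfolding mv_def by (rule sum_abs)
  also have "\<dots> = mv M n (\<lambda>l. \<bar>z l\<bar>) j"
    unfolding mv_def using M j by (intro sum.cong) (auto simp: abs_mult nonneg_mat_def)
  finally show ?thesis .
qed

lemma conn_transpose: assumes A: "A \<in> carrier_mat n n" and C: "conn A n"
  shows "conn (transpose_mat A) n"
  unfolding conn_def
proof (intro allI impI)
  fix S assume S: "S \<subseteq> {..<n}" "S \<noteq> {}" "S \<noteq> {..<n}"
  define S' where "S' = {..<n} - S"
  have "S' \<subseteq> {..<n}" "S' \<noteq> {}" "S' \<noteq> {..<n}" using S unfolding S'_def by auto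
  from C[unfolded conn_def, rule_format, OF this] obtain j l where
    "j < n" "l \<in> S'" "j \<notin> S'" "A $$ (j,l) > 0" by auto
  thus "\<exists>j<n. \<exists>l\<in>S. j \<notin> S \<and> transpose_mat A $$ (j, l) > 0" using A S
    unfolding S'_def by (intro exI[of _ l] conjI bexI[of _ j]) auto
qed

lemma irred_contra:
  assumes Ac: "A \<in> carrier_mat n n" and A0: "nonneg_mat A n" and C: "conn A n"
    and bnd: "\<And>m i j. i < n \<Longrightarrow> j < n \<Longrightarrow> \<bar>(transpose_mat A ^\<^sub>m m) $$ (i,j)\<bar> \<le> c1 + c2 * real m ^ d"
    and p1: "poly (char_poly A) 1 = 0" and dp1: "poly (pderiv (char_poly A)) 1 = 0"
  shows False
proof -
  define AT where "AT = transpose_mat A"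
  have ATc: "AT \<in> carrier_mat n n" unfolding AT_def using Ac by simp
  have AT0: "nonneg_mat AT n" using A0 Ac unfolding AT_def nonneg_mat_def by auto
  have CT: "conn AT n" unfolding AT_def by (rule conn_transpose[OF Ac C])
  have ATi: "\<And>i j. i < n \<Longrightarrow> j < n \<Longrightarrow> AT $$ (i,j) = A $$ (j,i)" unfolding AT_def using Ac by simp
  have "poly (char_poly AT) 1 = 0" unfolding AT_def char_poly_transpose_mat[OF Ac] by (rule p1)
  from eigvec_fun[OF ATc this] obtain z where z: "\<exists>i<n. z i \<noteq> 0" "\<And>j. j < n \<Longrightarrow> mv AT n z j = 1 * z j"
    by auto
  define w where "w = (\<lambda>l. \<bar>z l\<bar>)"
  from z(1) obtain i0 where i0: "i0 < n" "w i0 > 0" unfolding w_def by auto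
  have n0: "n > 0" using i0 by simp
  have w0: "\<And>j. 0 \<le> w j" unfolding w_def by simp
  have wsup: "\<And>j. j < n \<Longrightarrow> mv AT n w j \<ge> w j" unfolding w_def
    by (rule abs_sup[OF AT0 z(2)]) auto
  have bndT: "\<And>m i j. i < n \<Longrightarrow> j < n \<Longrightarrow> \<bar>(AT ^\<^sub>m m) $$ (i,j)\<bar> \<le> c1 + c2 * real m ^ d"
    unfolding AT_def by (rule bnd)
  have weq: "\<And>j. j < n \<Longrightarrow> mv AT n w j = w j"
    by (rule G_lemma[of AT n c1 c2 d w i0, OF ATc AT0 CT bndT w0 i0 wsup])
  have wpos: "\<And>j. j < n \<Longrightarrow> w j > 0"
  proof (rule ccontr)
    fix j0 assume j0: "j0 < n" "\<not> w j0 > 0"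
    define T where "T = {j\<in>{..<n}. w j > 0}"
    have "T \<subseteq> {..<n}" "T \<noteq> {}" "T \<noteq> {..<n}" using i0 j0 unfolding T_def by auto
    from CT[unfolded conn_def, rule_format, OF this] obtain j l where
      jl: "j < n" "l \<in> T" "j \<notin> T" "AT $$ (j,l) > 0" by auto
    have "AT $$ (j,l) * w l \<le> mv AT n w j" unfolding mv_def
      by (rule member_le_sum[of l "{..<n}" "\<lambda>l. AT $$ (j,l) * w l"])
        (use jl AT0 w0 T_def in \<open>auto simp: nonneg_mat_def\<close>)
    moreover have "AT $$ (j,l) * w l > 0" using jl unfolding T_def by auto
    ultimately have "w j > 0" using weq[OF jl(1)] by simp
    thus False using jl unfolding T_def by auto
  qed
  have Epos: "poly (char_poly (mat_erase A i i)) 1 > 0" if i: "i < n" for i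
  proof (rule ccontr)
    assume neg: "\<not> poly (char_poly (mat_erase A i i)) 1 > 0"
    define E where "E = mat_erase A i i"
    have Ec: "E \<in> carrier_mat n n" unfolding E_def using Ac by simp
    have Ei: "\<And>j l. j < n \<Longrightarrow> l < n \<Longrightarrow> E $$ (j,l) = (if j = i \<or> l = i then 0 else A $$ (j,l))"
      unfolding E_def mat_erase_def using Ac by auto
    have E0: "nonneg_mat E n" using A0 Ei unfolding nonneg_mat_def by auto
    obtain \<mu> where mu: "\<mu> \<ge> 1" "poly (char_poly E) \<mu> = 0"
    proof (cases "poly (char_poly E) 1 = 0")
      case True thus ?thesis using that by auto
    next
      case False
      hence lt: "poly (char_poly E) 1 < 0" using neg unfolding E_def by auto
      from degree_monic_char_poly[OF Ec] have dg: "degree (char_poly E) = n" "lead_coeff (char_poly E) = 1"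
        by auto
      from poly_pinfty_ge[of "char_poly E" 1] dg n0 obtain N where
        N: "\<And>x. x \<ge> N \<Longrightarrow> 1 \<le> poly (char_poly E) x" by auto
      have "poly (char_poly E) (max N 2) > 0" using N[of "max N 2"] by auto
      have "(1::real) < max N 2" by simp
      from poly_IVT_pos[of 1 "max N 2", OF this lt \<open>poly (char_poly E) (max N 2) > 0\<close>] obtain x where "x > 1" "poly (char_poly E) x = 0"
        by auto
      thus ?thesis by (intro that[of x]) auto
    qed
    from eigvec_fun[OF Ec mu(2)] obtain y0 where y0: "\<exists>j<n. y0 j \<noteq> 0" "\<And>j. j < n \<Longrightarrow> mv E n y0 j = \<mu> * y0 j"
      by auto
    have "mv E n y0 i = 0" unfolding mv_def using Ei i by auto
    hence yi0: "y0 i = 0" using y0(2)[OF i] mu(1) by simp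
    define y where "y = (\<lambda>l. \<bar>y0 l\<bar>)"
    have ynn: "\<And>j. 0 \<le> y j" unfolding y_def by simp
    have ysup: "\<And>j. j < n \<Longrightarrow> mv A n y j \<ge> y j"
    proof -
      fix j assume j: "j < n"
      have "y j \<le> mv E n y j" unfolding y_def by (rule abs_sup[OF E0 y0(2)[OF j] mu(1) j])
      also have "\<dots> \<le> mv A n y j" unfolding mv_def
        by (rule sum_mono) (use Ei A0 j ynn in \<open>auto simp: nonneg_mat_def\<close>)
      finally show "mv A n y j \<ge> y j" .
    qed
    have "(\<Sum>j<n. w j * (mv A n y j - y j)) = (\<Sum>j<n. w j * mv A n y j) - (\<Sum>j<n. w j * y j)"
      by (simp add: algebra_simps sum_subtractf)
    also have "(\<Sum>j<n. w j * mv A n y j) = (\<Sum>l<n. y l * mv AT n w l)"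
    proof -
      have "(\<Sum>j<n. w j * mv A n y j) = (\<Sum>j<n. \<Sum>l<n. w j * A $$ (j,l) * y l)"
        unfolding mv_def sum_distrib_left by (simp add: mult.assoc)
      also have "\<dots> = (\<Sum>l<n. \<Sum>j<n. w j * A $$ (j,l) * y l)" by (rule sum.swap)
      also have "\<dots> = (\<Sum>l<n. y l * mv AT n w l)"
        unfolding mv_def sum_distrib_left
        by (intro sum.cong refl) (simp add: ATi)
      finally show ?thesis .
    qed
    also have "\<dots> = (\<Sum>j<n. w j * y j)" using weq by (auto intro!: sum.cong)
    finally have "(\<Sum>j<n. w j * (mv A n y j - y j)) = 0" by simp
    moreover have "\<forall>j\<in>{..<n}. 0 \<le> w j * (mv A n y j - y j)" using ysup w0 by simp
    ultimately have "\<forall>j\<in>{..<n}. w j * (mv A n y j - y j) = 0"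
      using sum_nonneg_eq_0_iff[of "{..<n}" "\<lambda>j. w j * (mv A n y j - y j)"] by blast
    hence yeq: "\<And>j. j < n \<Longrightarrow> mv A n y j = y j"
    proof -
      fix j assume "j < n"
      hence "w j * (mv A n y j - y j) = 0" using \<open>\<forall>j\<in>{..<n}. w j * (mv A n y j - y j) = 0\<close> by blast
      with wpos[OF \<open>j < n\<close>] show "mv A n y j = y j" by simp
    qed
    define T where "T = {j\<in>{..<n}. y j > 0}"
    have "T \<subseteq> {..<n}" "T \<noteq> {}" "T \<noteq> {..<n}" using y0(1) yi0 i unfolding T_def y_def by auto
    from C[unfolded conn_def, rule_format, OF this] obtain j l where
      jl: "j < n" "l \<in> T" "j \<notin> T" "A $$ (j,l) > 0" by auto
    have "A $$ (j,l) * y l \<le> mv A n y j" unfolding mv_def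
      by (rule member_le_sum[of l "{..<n}" "\<lambda>l. A $$ (j,l) * y l"])
        (use jl A0 ynn T_def in \<open>auto simp: nonneg_mat_def\<close>)
    moreover have "A $$ (j,l) * y l > 0" using jl unfolding T_def by auto
    ultimately have "y j > 0" using yeq[OF jl(1)] by simp
    thus False using jl unfolding T_def by auto
  qed
  have "poly (monom 1 1 * pderiv (char_poly A)) 1 = poly (\<Sum>i<n. char_poly (mat_erase A i i)) 1"
    by (simp only: pderiv_char_poly_mat_erase[OF Ac])
  hence "poly (pderiv (char_poly A)) 1 = (\<Sum>i<n. poly (char_poly (mat_erase A i i)) 1)"
    by (simp add: poly_sum poly_monom)
  also have "\<dots> > 0" using Epos n0 by (intro sum_pos) auto
  finally show False using dp1 by simp
qed



lemma insert_index_image: assumes i: "i < Suc m"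
  shows "insert_index i ` {..<m} = {..<Suc m} - {i}"
proof
  show "insert_index i ` {..<m} \<subseteq> {..<Suc m} - {i}"
    by (auto simp: insert_index_def)
  show "{..<Suc m} - {i} \<subseteq> insert_index i ` {..<m}"
  proof
    fix j assume j: "j \<in> {..<Suc m} - {i}"
    show "j \<in> insert_index i ` {..<m}"
    proof (cases "j < i")
      case True
      hence "j = insert_index i j" "j < m" using i by (auto simp: insert_index_def)
      thus ?thesis by blast
    next
      case False
      hence "j > i" using j by auto
      hence "j = insert_index i (j - 1)" "j - 1 < m" using j by (auto simp: insert_index_def)
      thus ?thesis by blast
    qed
  qed
qed

lemma insert_index_inj: "inj_on (insert_index i) X"
  by (auto simp: insert_index_def inj_on_def split: if_splits)

lemma trace_coeff:
  fixes A :: "complex mat"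
  assumes A: "A \<in> carrier_mat n n" and n: "n > 0"
  shows "coeff (char_poly A) (n - 1) = - (\<Sum>i<n. A $$ (i,i))"
  using A n
proof (induction n arbitrary: A)
  case 0 thus ?case by simp
next
  case (Suc m A)
  show ?case
  proof (cases "m = 0")
    case True
    have ut: "upper_triangular A" using Suc.prems True by (auto simp: upper_triangular_def)
    have "diag_mat A = [A $$ (0,0)]" using Suc.prems True by (simp add: diag_mat_def)
    hence "char_poly A = [:- A $$ (0,0), 1:]" using char_poly_upper_triangular[OF Suc.prems(1) ut] by simp
    thus ?thesis using True by simp
  next
    case False
    hence m0: "m > 0" by simp
    define d where "d = (\<lambda>i. A $$ (i,i))"
    have "of_nat m * coeff (char_poly A) m = coeff (pderiv (char_poly A)) (m - 1)"
      using m0 by (simp add: coeff_pderiv)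
    also have "\<dots> = coeff (\<Sum>i < Suc m. char_poly (mat_delete A i i)) (m - 1)"
      by (simp only: pderiv_char_poly[OF Suc.prems(1)])
    also have "\<dots> = (\<Sum>i < Suc m. coeff (char_poly (mat_delete A i i)) (m - 1))"
      by (simp add: coeff_sum)
    also have "\<dots> = (\<Sum>i < Suc m. - ((\<Sum>j<Suc m. d j) - d i))"
    proof (rule sum.cong[OF refl])
      fix i assume i: "i \<in> {..<Suc m}"
      have Ai: "mat_delete A i i \<in> carrier_mat m m" using mat_delete_carrier[OF Suc.prems(1)] by simp
      have "coeff (char_poly (mat_delete A i i)) (m - 1) = - (\<Sum>j<m. mat_delete A i i $$ (j,j))"
        by (rule Suc.IH[OF Ai m0])
      also have "(\<Sum>j<m. mat_delete A i i $$ (j,j)) = (\<Sum>j<m. d (insert_index i j))"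
        using mat_delete_index[OF Suc.prems(1), of i i] i unfolding d_def by (intro sum.cong) auto
      also have "\<dots> = sum d (insert_index i ` {..<m})"
        by (rule sum.reindex[symmetric, OF insert_index_inj, unfolded comp_def])
      also have "\<dots> = sum d ({..<Suc m} - {i})" using i by (simp add: insert_index_image)
      also have "\<dots> = (\<Sum>j<Suc m. d j) - d i" using i by (simp add: sum_diff1)
      finally show "coeff (char_poly (mat_delete A i i)) (m - 1) = - ((\<Sum>j<Suc m. d j) - d i)" .
    qed
    also have "\<dots> = - (of_nat m * (\<Sum>j<Suc m. d j))"
      by (simp add: sum_subtractf sum_negf algebra_simps)
    finally have "of_nat m * coeff (char_poly A) m = of_nat m * (- (\<Sum>j<Suc m. d j))"
      by (simp add: algebra_simps)
    with m0 have "coeff (char_poly A) m = - (\<Sum>j<Suc m. d j)" by simp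
    thus ?thesis unfolding d_def by simp
  qed
qed

lemma coeff_lin_prod:
  fixes as :: "'a :: comm_ring_1 list"
  shows "coeff (\<Prod>a\<leftarrow>as. [:- a, 1:]) (length as) = 1 \<and>
     (\<forall>j > length as. coeff (\<Prod>a\<leftarrow>as. [:- a, 1:]) j = 0) \<and>
     (as \<noteq> [] \<longrightarrow> coeff (\<Prod>a\<leftarrow>as. [:- a, 1:]) (length as - 1) = - sum_list as)"
proof (induction as)
  case Nil
  show ?case by (auto simp: coeff_1)
next
  case (Cons a as)
  define Q where "Q = (\<Prod>a\<leftarrow>as. [:- a, 1:])"
  have P: "(\<Prod>a\<leftarrow>a # as. [:- a, 1:]) = Polynomial.smult (- a) Q + pCons 0 Q"
    unfolding Q_def by (simp add: mult_pCons_left)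
  have cf: "\<And>k. coeff (\<Prod>a\<leftarrow>a # as. [:- a, 1:]) k = - a * coeff Q k + (if k = 0 then 0 else coeff Q (k - 1))"
    unfolding P by (simp add: coeff_pCons split: nat.splits)
  from Cons[folded Q_def] have IH1: "coeff Q (length as) = 1" and IH2: "\<And>j. j > length as \<Longrightarrow> coeff Q j = 0"
    and IH3: "as \<noteq> [] \<Longrightarrow> coeff Q (length as - 1) = - sum_list as" by auto
  show ?case
  proof (intro conjI allI impI)
    show "coeff (\<Prod>a\<leftarrow>a # as. [:- a, 1:]) (length (a # as)) = 1"
      unfolding cf using IH1 IH2[of "Suc (length as)"] by simp
    fix j assume "j > length (a # as)"
    thus "coeff (\<Prod>a\<leftarrow>a # as. [:- a, 1:]) j = 0" unfolding cf using IH2[of j] IH2[of "j - 1"] by simp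
  next
    show "coeff (\<Prod>a\<leftarrow>a # as. [:- a, 1:]) (length (a # as) - 1) = - sum_list (a # as)"
      unfolding cf using IH1 IH3 by (cases as) auto
  qed
qed



lemma det_perm_both: fixes M :: "'a :: comm_ring_1 mat"
  assumes M: "M \<in> carrier_mat n n" and p: "p permutes {0..<n}"
  shows "det (mat n n (\<lambda>(i,j). M $$ (p i, p j))) = det M"
proof -
  have pn: "\<And>i. i < n \<Longrightarrow> p i < n" using p by (simp add: permutes_in_image)
  define R where "R = mat n n (\<lambda>(i,j). M $$ (p i, j))"
  have R: "R \<in> carrier_mat n n" unfolding R_def by simp
  have dR: "det R = signof p * det M" unfolding R_def by (rule det_permute_rows[OF M p])
  define R' where "R' = mat n n (\<lambda>(i,j). transpose_mat R $$ (p i, j))"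
  have dR': "det R' = signof p * det (transpose_mat R)" unfolding R'_def
    by (rule det_permute_rows[OF _ p]) (use R in simp)
  have eq: "mat n n (\<lambda>(i,j). M $$ (p i, p j)) = transpose_mat R'"
    by (rule eq_matI) (use pn R in \<open>auto simp: R'_def R_def\<close>)
  have "det (mat n n (\<lambda>(i,j). M $$ (p i, p j))) = det R'"
    unfolding eq by (rule det_transpose[of _ n]) (simp add: R'_def)
  also have "\<dots> = signof p * (signof p * det M)" unfolding dR' det_transpose[OF R] dR ..
  also have "\<dots> = (signof p * signof p) * det M" by (simp add: ac_simps)
  also have "signof p * signof p = (1 :: 'a)"
    by (metis of_int_1 of_int_mult sign_idempotent)
  finally show ?thesis by simp
qed

lemma block_factor:
  fixes A :: "'a :: idom mat"
  assumes A: "A \<in> carrier_mat n n" and T: "T \<subseteq> {..<n}" "T \<noteq> {}" "T \<noteq> {..<n}"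
    and z: "\<And>j l. j < n \<Longrightarrow> l \<in> T \<Longrightarrow> j \<notin> T \<Longrightarrow> A $$ (j,l) = 0"
  shows "\<exists>m p. 0 < m \<and> m < n \<and> p permutes {0..<n} \<and>
    char_poly A = char_poly (mat m m (\<lambda>(i,j). A $$ (p i, p j))) *
        char_poly (mat (n-m) (n-m) (\<lambda>(i,j). A $$ (p (m+i), p (m+j))))"
proof -
  define U where "U = {..<n} - T"
  define m where "m = card U"
  have finT: "finite T" using T finite_subset by blast
  have finU: "finite U" unfolding U_def by simp
  have cardUT: "card U + card T = n" unfolding U_def using T card_Diff_subset[OF finT T(1)]
    card_mono[OF _ T(1)] by simp
  have m0: "m > 0" unfolding m_def using T finU unfolding U_def by (auto simp: card_gt_0_iff)
  have mn: "m < n" using cardUT T(2) finT unfolding m_def by (auto simp: card_gt_0_iff)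
  define L where "L = sorted_list_of_set U @ sorted_list_of_set T"
  have lenL: "length L = n" unfolding L_def using cardUT finU finT m_def by simp
  have distL: "distinct L" unfolding L_def using finU finT by (auto simp: U_def)
  have setL: "set L = {..<n}" unfolding L_def using finU finT T by (auto simp: U_def)
  define p where "p = (\<lambda>i. if i < n then L ! i else i)"
  have bij: "bij_betw ((!) L) {..<n} {..<n}" using bij_betw_nth[OF distL _ setL[symmetric]] lenL by simp
  have "bij_betw p {0..<n} {0..<n}"
    using bij unfolding p_def atLeast0LessThan by (rule bij_betw_cong[THEN iffD1, rotated]) auto
  hence pp: "p permutes {0..<n}" by (rule bij_imp_permutes) (auto simp: p_def)
  have pn: "\<And>i. i < n \<Longrightarrow> p i < n" using pp by (simp add: permutes_in_image)
  have pinj: "\<And>i j. i < n \<Longrightarrow> j < n \<Longrightarrow> p i = p j \<longleftrightarrow> i = j"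
    using pp by (metis permutes_inj injD)
  have pU: "\<And>i. i < m \<Longrightarrow> p i \<notin> T"
  proof -
    fix i assume i: "i < m"
    hence "p i = sorted_list_of_set U ! i" using mn finU unfolding p_def L_def m_def
      by (simp add: nth_append)
    also have "\<dots> \<in> U" using i finU unfolding m_def by (metis nth_mem length_sorted_list_of_set set_sorted_list_of_set)
    finally show "p i \<notin> T" unfolding U_def by simp
  qed
  have pT: "\<And>i. m \<le> i \<Longrightarrow> i < n \<Longrightarrow> p i \<in> T"
  proof -
    fix i assume i: "m \<le> i" "i < n"
    hence "p i = sorted_list_of_set T ! (i - m)" using finU unfolding p_def L_def m_def
      by (simp add: nth_append)
    also have "\<dots> \<in> T" using i finT cardUT unfolding m_def
      by (metis nth_mem length_sorted_list_of_set set_sorted_list_of_set diff_less_mono add.commute less_diff_conv2)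
    finally show "p i \<in> T" .
  qed
  define A' where "A' = mat n n (\<lambda>(i,j). A $$ (p i, p j))"
  have A'c: "A' \<in> carrier_mat n n" unfolding A'_def by simp
  have cA: "char_poly A' = char_poly A"
  proof -
    have "char_poly_matrix A' = mat n n (\<lambda>(i,j). char_poly_matrix A $$ (p i, p j))"
      by (rule eq_matI) (use A pn pinj in \<open>auto simp: A'_def char_poly_matrix_def\<close>)
    thus ?thesis unfolding char_poly_def
      using det_perm_both[OF char_poly_matrix_closed[OF A] pp] by simp
  qed
  define B1 where "B1 = mat m m (\<lambda>(i,j). A $$ (p i, p j))"
  define B2 where "B2 = mat (n-m) (n-m) (\<lambda>(i,j). A $$ (p (m+i), p (m+j)))"
  define C3 where "C3 = (mat (n-m) m (\<lambda>(i,j). [: - A' $$ (m+i, j) :]) :: 'a poly mat)"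
  have blk: "char_poly_matrix A' = four_block_mat (char_poly_matrix B1) (0\<^sub>m m (n-m)) C3 (char_poly_matrix B2)"
  proof (rule eq_matI)
    fix i j assume ij: "i < dim_row (four_block_mat (char_poly_matrix B1) (0\<^sub>m m (n-m)) C3 (char_poly_matrix B2))"
      "j < dim_col (four_block_mat (char_poly_matrix B1) (0\<^sub>m m (n-m)) C3 (char_poly_matrix B2))"
    hence i: "i < n" and j: "j < n" using mn by (auto simp: B1_def B2_def char_poly_matrix_def)
    show "char_poly_matrix A' $$ (i, j) =
      four_block_mat (char_poly_matrix B1) (0\<^sub>m m (n-m)) C3 (char_poly_matrix B2) $$ (i, j)"
    proof (cases "i < m")
      case True
      show ?thesis
      proof (cases "j < m")
        case True
        thus ?thesis using \<open>i < m\<close> i j mn by (simp add: A'_def B1_def B2_def char_poly_matrix_def)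
      next
        case False
        have "A $$ (p i, p j) = 0" by (rule z[OF pn[OF i] pT[OF _ j] pU[OF \<open>i < m\<close>]]) (use False in simp)
        thus ?thesis using \<open>i < m\<close> False i j mn by (simp add: A'_def B1_def B2_def char_poly_matrix_def)
      qed
    next
      case False
      show ?thesis
      proof (cases "j < m")
        case True
        thus ?thesis using False i j mn by (simp add: A'_def B1_def B2_def C3_def char_poly_matrix_def)
      next
        case False2: False
        thus ?thesis using False i j mn by (auto simp: A'_def B1_def B2_def C3_def char_poly_matrix_def)
      qed
    qed
  qed (use mn in \<open>auto simp: A'_def B1_def B2_def char_poly_matrix_def\<close>)
  have c1: "char_poly_matrix B1 \<in> carrier_mat m m" by (simp add: B1_def)
  moreover have c3: "C3 \<in> carrier_mat (n-m) m" by (simp add: C3_def)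
  moreover have c4: "char_poly_matrix B2 \<in> carrier_mat (n-m) (n-m)" by (simp add: B2_def)
  have "char_poly A' = char_poly B1 * char_poly B2" using blk c1 c3 c4
    unfolding char_poly_def[of A'] char_poly_def[of B1] char_poly_def[of B2]
    by (simp add: det_four_block_mat_upper_right_zero)
  thus ?thesis using cA m0 mn pp unfolding B1_def B2_def by metis
qed



lemma sigma_size: "size (sigma_n k) = 2 * (k + 1)"
  unfolding sigma_n_def by simp

lemma sum_mset_of_real: "sum_mset (image_mset complex_of_real M) = complex_of_real (sum_mset M)"
  by (induction M) auto

lemma sigma_sum: "sum_mset (sigma_n k) = 0"
proof -
  define a where "a = -1 / (2 * real k + 1)"
  define b where "b = (1 - 2 * real k) / (2 * real k + 1)"
  have e: "sigma_n k = image_mset complex_of_real (replicate_mset k 1 + {#a#} + replicate_mset (k+1) b)"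
    unfolding sigma_n_def a_def b_def by (simp add: image_replicate_mset)
  have r: "real k + a + real (k+1) * b = 0" unfolding a_def b_def by (simp add: field_simps)
  have "sum_mset (replicate_mset k 1 + {#a#} + replicate_mset (k+1) b) = real k + a + real (k+1) * b"
    by (simp add: sum_mset_replicate_mset algebra_simps)
  with r have s0: "sum_mset (replicate_mset k 1 + {#a#} + replicate_mset (k+1) b) = 0" by simp
  show ?thesis unfolding e sum_mset_of_real s0 by simp
qed

lemma order_lin_list: "order x (\<Prod>a\<leftarrow>as. [:- a, 1:]) = count (mset as) (x :: 'a :: idom)"
proof -
  have "order x (\<Prod>a\<leftarrow>as. [:- a, 1:]) = sum_list (map (order x) (map (\<lambda>a. [:- a, 1:]) as))"
    by (rule order_prod_list) auto
  also have "\<dots> = count (mset as) x"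
    by (induction as) (auto simp: order_linear')
  finally show ?thesis .
qed

lemma nat_arith:
  fixes k c1 c2 c3 :: nat
  assumes "k \<ge> 2" "c1 \<le> k" "c2 \<le> 1" "c3 \<le> k + 1"
    "c1 * (2*k+1) = c2 + c3 * (2*k - 1)"
  shows "c1 + c2 + c3 = 0 \<or> c1 + c2 + c3 = 2*(k+1)"
proof (cases "c3 \<le> c1")
  case True
  have "c3 * (2*k-1) \<le> c1 * (2*k-1)" using True by (simp add: mult_le_mono1)
  hence "c1 * (2*k+1) \<le> 1 + c1 * (2*k-1)" using assms by linarith
  hence "c1 = 0" using assms(1)
    by (cases c1) (auto simp: algebra_simps)
  thus ?thesis using assms by auto
next
  case False
  hence "c1 + 1 \<le> c3" by simp
  hence "(c1+1) * (2*k-1) \<le> c3 * (2*k-1)" by (rule mult_le_mono1)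
  hence h: "(c1+1) * (2*k-1) \<le> c1 * (2*k+1)" using assms by linarith
  have "c1 = k"
  proof (rule ccontr)
    assume "c1 \<noteq> k" hence "c1 + 1 \<le> k" using assms by auto
    have "(c1+1) * (2*k-1) = c1 * (2*k+1) + (2*k - 1 - 2*c1)" using \<open>c1 + 1 \<le> k\<close> assms(1)
      by (simp add: algebra_simps diff_mult_distrib2)
    thus False using h \<open>c1 + 1 \<le> k\<close> by linarith
  qed
  show ?thesis
  proof (cases "c3 = k + 1")
    case True
    have "(k+1)*(2*k-1) + 1 = k * (2*k+1)" using assms(1)
      by (cases k) (auto simp: algebra_simps)
    moreover have "k * (2*k+1) = c2 + (k+1)*(2*k-1)" using assms(5) \<open>c1 = k\<close> True by simp
    ultimately have "c2 = 1" by linarith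
    thus ?thesis using True \<open>c1 = k\<close> by simp
  next
    case False
    hence "c3 \<le> k" using assms by auto
    hence "c3 * (2*k-1) \<le> k * (2*k-1)" by (simp add: mult_le_mono1)
    moreover have "k * (2*k-1) + 1 < k * (2*k+1)" using assms(1)
      by (cases k) (auto simp: algebra_simps)
    moreover have "k * (2*k+1) = c2 + c3*(2*k-1)" using assms(5) \<open>c1 = k\<close> by simp
    ultimately show ?thesis using assms(3) by linarith
  qed
qed

lemma final_arith:
  assumes k: "k \<ge> 2" and M: "M \<subseteq># sigma_n k" and s: "sum_mset M = 0"
  shows "size M = 0 \<or> size M = 2 * (k + 1)"
proof -
  define ra where "ra = -1 / (2 * real k + 1)"
  define rb where "rb = (1 - 2 * real k) / (2 * real k + 1)"
  define ca where "ca = complex_of_real ra"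
  define cb where "cb = complex_of_real rb"
  have kpos: "2 * real k + 1 > 0" by simp
  have ra0: "ra < 0" unfolding ra_def using kpos by (simp add: divide_neg_pos)
  have rb0: "rb < 0" unfolding rb_def using k kpos by (intro divide_neg_pos) auto
  have rab: "ra \<noteq> rb"
  proof
    assume "ra = rb"
    hence "-1 / (2 * real k + 1) = (1 - 2 * real k) / (2 * real k + 1)" unfolding ra_def rb_def .
    hence "-1 = 1 - 2 * real k" using kpos by (simp only: divide_cancel_right) simp
    moreover have "real k \<ge> 2" using k by simp
    ultimately show False by linarith
  qed
  have d1: "1 \<noteq> ca"
  proof
    assume "1 = ca"
    hence "complex_of_real 1 = complex_of_real ra" unfolding ca_def by simp
    hence "ra = 1" by (simp only: of_real_eq_iff)
    with ra0 show False by simp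
  qed
  have d2: "1 \<noteq> cb"
  proof
    assume "1 = cb"
    hence "complex_of_real 1 = complex_of_real rb" unfolding cb_def by simp
    hence "rb = 1" by (simp only: of_real_eq_iff)
    with rb0 show False by simp
  qed
  have d3: "ca \<noteq> cb" unfolding ca_def cb_def using rab by simp
  have sig: "sigma_n k = replicate_mset k 1 + {#ca#} + replicate_mset (k+1) cb"
    unfolding sigma_n_def ca_def cb_def ra_def rb_def by simp
  define c1 where "c1 = count M 1"
  define c2 where "c2 = count M ca"
  define c3 where "c3 = count M cb"
  have cnt: "\<And>x. count M x \<le> count (sigma_n k) x" using M by (simp add: subseteq_mset_def)
  have b1: "c1 \<le> k" using cnt[of 1] d1 d2 unfolding c1_def sig by auto
  have b2: "c2 \<le> 1" using cnt[of ca] d1 d3 unfolding c2_def sig by auto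
  have b3: "c3 \<le> k + 1" using cnt[of cb] d2 d3 unfolding c3_def sig by auto
  have Meq: "M = replicate_mset c1 1 + replicate_mset c2 ca + replicate_mset c3 cb"
  proof (rule multiset_eqI)
    fix x
    show "count M x = count (replicate_mset c1 1 + replicate_mset c2 ca + replicate_mset c3 cb) x"
    proof (cases "x = 1 \<or> x = ca \<or> x = cb")
      case True thus ?thesis using d1 d2 d3 unfolding c1_def c2_def c3_def by auto
    next
      case False
      hence "count (sigma_n k) x = 0" unfolding sig by auto
      with cnt[of x] have "count M x = 0" by simp
      thus ?thesis using False by auto
    qed
  qed
  have "0 = sum_mset M" using s by simp
  also have "\<dots> = complex_of_real (real c1 + real c2 * ra + real c3 * rb)"
    unfolding Meq ca_def cb_def by (simp add: sum_mset_replicate_mset)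
  finally have E: "real c1 + real c2 * ra + real c3 * rb = 0" by (metis of_real_eq_0_iff)
  have ra': "ra * (2 * real k + 1) = -1" unfolding ra_def using kpos by simp
  have rb': "rb * (2 * real k + 1) = 1 - 2 * real k" unfolding rb_def using kpos by simp
  have "0 = (real c1 + real c2 * ra + real c3 * rb) * (2 * real k + 1)" using E by simp
  also have "\<dots> = real c1 * (2 * real k + 1) + real c2 * (ra * (2 * real k + 1)) + real c3 * (rb * (2 * real k + 1))"
    by (simp only: distrib_right mult.assoc)
  also have "\<dots> = real c1 * (2 * real k + 1) - real c2 - real c3 * (2 * real k - 1)"
    unfolding ra' rb' by (simp add: algebra_simps)
  finally have e: "real c1 * (2 * real k + 1) = real c2 + real c3 * (2 * real k - 1)" by simp
  have k1: "real (2*k-1) = 2 * real k - 1" using k by (simp add: of_nat_diff)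
  have "real (c1 * (2*k+1)) = real (c2 + c3 * (2*k - 1))"
    unfolding of_nat_mult of_nat_add k1 using e by simp
  hence "c1 * (2*k+1) = c2 + c3 * (2*k - 1)" by (simp only: of_nat_eq_iff)
  from nat_arith[OF k b1 b2 b3 this] show ?thesis unfolding Meq by simp
qed



lemma not_realizable:
  assumes k: "k \<ge> 2"
  shows "\<not> realizable (sigma_n k)"
proof
  assume "realizable (sigma_n k)"
  define \<sigma> where "\<sigma> = sigma_n k"
  define n where "n = size \<sigma>"
  have nk: "n = 2 * (k + 1)" unfolding n_def \<sigma>_def sigma_n_def by simp
  have n0: "n > 0" using nk by simp
  from \<open>realizable (sigma_n k)\<close> obtain A :: "real mat" where A: "A \<in> carrier_mat n n"
    and nn: "\<And>i j. i < n \<Longrightarrow> j < n \<Longrightarrow> A $$ (i,j) \<ge> 0"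
    and cp: "char_poly (map_mat complex_of_real A) = (\<Prod>x\<in>#\<sigma>. [:- x, 1:])"
    unfolding realizable_def \<sigma>_def[symmetric] n_def[symmetric] by blast
  have A0: "nonneg_mat A n" using nn unfolding nonneg_mat_def by auto
  define Ac where "Ac = map_mat complex_of_real A"
  have Acc: "Ac \<in> carrier_mat n n" unfolding Ac_def using A by simp
  define P where "P = (\<Prod>x\<in>#\<sigma>. [:- x, 1:])"
  obtain ls where ls: "mset ls = \<sigma>" using ex_mset by blast
  have Pls: "P = (\<Prod>a\<leftarrow>ls. [:- a, 1:])" unfolding P_def ls[symmetric]
    by (simp add: prod_mset_prod_list[symmetric])
  have lenls: "length ls = n" unfolding n_def ls[symmetric] by simp
  have cpA: "char_poly Ac = map_poly of_real (char_poly A)"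
    unfolding Ac_def by (rule of_real_hom.char_poly_hom[OF A])
  have cpP: "char_poly Ac = P" unfolding Ac_def P_def by (rule cp)
  obtain k' where k': "k = Suc (Suc k')" using k by (metis add_2_eq_Suc le_iff_add)
  define X where "X = {# complex_of_real (-1 / (2 * real k + 1)) #}
      + replicate_mset (k + 1) (complex_of_real ((1 - 2 * real k) / (2 * real k + 1)))"
  have sX: "\<sigma> = replicate_mset (Suc (Suc k')) 1 + X" unfolding \<sigma>_def sigma_n_def X_def k'
    by (simp only: add.assoc)
  define R where "R = [:- 1, 1:] ^ k' * (\<Prod>x\<in># X. [:- x, 1:])"
  have PR: "P = [:- 1, 1:] * ([:- 1, 1:] * R)"
    unfolding P_def R_def sX image_mset_union prod_mset.union image_replicate_mset prod_mset_replicate_mset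
    by (simp only: power_Suc mult.assoc)
  have P1: "poly P 1 = 0" unfolding PR by simp
  have dP1: "poly (pderiv P) 1 = 0" unfolding PR pderiv_mult poly_add poly_mult
    by simp
  have p1: "poly (char_poly A) 1 = 0"
  proof -
    have "complex_of_real (poly (char_poly A) 1) = poly (map_poly of_real (char_poly A)) (of_real 1)"
      by (simp only: of_real_hom.poly_map_poly)
    also have "\<dots> = 0" using P1 cpA cpP by simp
    finally show ?thesis by simp
  qed
  have dp1: "poly (pderiv (char_poly A)) 1 = 0"
  proof -
    have "complex_of_real (poly (pderiv (char_poly A)) 1) = poly (map_poly of_real (pderiv (char_poly A))) (of_real 1)"
      by (simp only: of_real_hom.poly_map_poly)
    also have "\<dots> = poly (pderiv (map_poly of_real (char_poly A))) 1"
      by (simp add: of_real_hom.map_poly_pderiv)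
    also have "\<dots> = 0" using dP1 cpA cpP by simp
    finally show ?thesis by simp
  qed
  have sls: "sum_list ls = 0" using sigma_sum[of k] unfolding \<sigma>_def[symmetric] ls[symmetric]
    by (simp add: sum_mset_sum_list)
  have "coeff P (n - 1) = 0" unfolding Pls using coeff_lin_prod[of ls] lenls sls n0 by auto
  hence "- (\<Sum>i<n. Ac $$ (i,i)) = 0" using trace_coeff[OF Acc n0] cpP by simp
  hence "complex_of_real (\<Sum>i<n. A $$ (i,i)) = 0" unfolding Ac_def using A by simp
  hence "(\<Sum>i<n. A $$ (i,i)) = 0" by (simp only: of_real_eq_0_iff)
  hence diag0: "\<And>i. i < n \<Longrightarrow> A $$ (i,i) = 0"
    using sum_nonneg_eq_0_iff[of "{..<n}" "\<lambda>i. A $$ (i,i)"] nn by auto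
  have rootP: "\<And>x. poly P x = 0 \<Longrightarrow> cmod x \<le> 1"
  proof -
    fix x assume "poly P x = 0"
    hence "(\<Prod>y\<in>#\<sigma>. poly [:- y, 1:] x) = 0" unfolding P_def by (simp add: poly_prod_mset)
    then obtain y where y: "y \<in># \<sigma>" "poly [:- y, 1:] x = 0" by (auto simp: prod_mset_zero_iff)
    hence xy: "x = y" by simp
    have kp: "2 * real k + 1 > 0" by simp
    have "\<bar>-1 / (2 * real k + 1)\<bar> \<le> 1" using kp by (simp add: abs_div)
    moreover have "\<bar>(1 - 2 * real k) / (2 * real k + 1)\<bar> \<le> 1" using kp k by (simp add: abs_div field_simps)
    moreover have "y = 1 \<or> y = complex_of_real (-1 / (2 * real k + 1)) \<or>
        y = complex_of_real ((1 - 2 * real k) / (2 * real k + 1))"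
      using y(1) unfolding \<sigma>_def sigma_n_def by (auto split: if_splits)
    ultimately show "cmod x \<le> 1" unfolding xy
      by (metis norm_of_real norm_one order_refl)
  qed
  define Bc where "Bc = map_mat complex_of_real (transpose_mat A)"
  have Bcc: "Bc \<in> carrier_mat n n" unfolding Bc_def using A by simp
  have BcT: "Bc = transpose_mat Ac" unfolding Bc_def Ac_def using A by (auto intro!: eq_matI)
  have cpB: "char_poly Bc = P" unfolding BcT char_poly_transpose_mat[OF Acc] by (rule cpP)
  have "spectral_radius Bc \<le> 1"
  proof -
    from spectral_radius_mem_max(1)[OF Bcc n0] obtain ev where
      ev: "ev \<in> spectrum Bc" "spectral_radius Bc = cmod ev" by auto
    from ev(1) have "poly P ev = 0" unfolding spectrum_root_char_poly[OF Bcc] cpB by simp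
    from rootP[OF this] ev(2) show ?thesis by simp
  qed
  from spectral_radius_jnf_norm_bound_le_1_upper_triangular[OF Bcc this] obtain c1 c2
    where nb: "\<And>m. norm_bound (Bc ^\<^sub>m m) (c1 + c2 * real m ^ (n - 1))" by blast
  have bnd: "\<And>m i j. i < n \<Longrightarrow> j < n \<Longrightarrow> \<bar>(transpose_mat A ^\<^sub>m m) $$ (i,j)\<bar> \<le> c1 + c2 * real m ^ (n - 1)"
  proof -
    fix m i j assume ij: "i < n" "j < n"
    have AT: "transpose_mat A \<in> carrier_mat n n" using A by simp
    have "Bc ^\<^sub>m m = map_mat complex_of_real (transpose_mat A ^\<^sub>m m)"
      unfolding Bc_def by (rule of_real_hom.mat_hom_pow[OF AT, symmetric])
    hence "(Bc ^\<^sub>m m) $$ (i,j) = complex_of_real ((transpose_mat A ^\<^sub>m m) $$ (i,j))"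
      using ij AT by simp
    moreover have "cmod ((Bc ^\<^sub>m m) $$ (i,j)) \<le> c1 + c2 * real m ^ (n - 1)"
      using nb[of m] ij Bcc unfolding norm_bound_def by simp
    ultimately show "\<bar>(transpose_mat A ^\<^sub>m m) $$ (i,j)\<bar> \<le> c1 + c2 * real m ^ (n - 1)" by simp
  qed
  show False
  proof (cases "conn A n")
    case True
    from irred_contra[OF A A0 True bnd p1 dp1] show False .
  next
    case False
    then obtain S where S: "S \<subseteq> {..<n}" "S \<noteq> {}" "S \<noteq> {..<n}"
      and Sz: "\<And>j l. j < n \<Longrightarrow> l \<in> S \<Longrightarrow> j \<notin> S \<Longrightarrow> \<not> A $$ (j,l) > 0"
      unfolding conn_def by blast
    have z: "\<And>j l. j < n \<Longrightarrow> l \<in> S \<Longrightarrow> j \<notin> S \<Longrightarrow> Ac $$ (j,l) = 0"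
    proof -
      fix j l assume jl: "j < n" "l \<in> S" "j \<notin> S"
      hence "l < n" using S by auto
      with nn[OF jl(1) this] Sz[OF jl] have "A $$ (j,l) = 0" by simp
      thus "Ac $$ (j,l) = 0" unfolding Ac_def using A jl \<open>l < n\<close> by simp
    qed
    from block_factor[OF Acc S z] obtain m p where mp: "0 < m" "m < n" "p permutes {0..<n}"
      and fac: "char_poly Ac = char_poly (mat m m (\<lambda>(i,j). Ac $$ (p i, p j))) *
        char_poly (mat (n-m) (n-m) (\<lambda>(i,j). Ac $$ (p (m+i), p (m+j))))" by blast
    define B1 where "B1 = mat m m (\<lambda>(i,j). Ac $$ (p i, p j))"
    have B1c: "B1 \<in> carrier_mat m m" unfolding B1_def by simp
    from char_poly_factorized[OF B1c] obtain as where as: "char_poly B1 = (\<Prod>a\<leftarrow>as. [:- a, 1:])"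
      "length as = m" by blast
    have pn: "\<And>i. i < n \<Longrightarrow> p i < n" using mp(3) by (simp add: permutes_in_image)
    have "coeff (char_poly B1) (m - 1) = - (\<Sum>i<m. B1 $$ (i,i))" by (rule trace_coeff[OF B1c mp(1)])
    also have "(\<Sum>i<m. B1 $$ (i,i)) = 0"
      using pn diag0 mp(2) A unfolding B1_def Ac_def by (intro sum.neutral) auto
    finally have "sum_list as = 0" using coeff_lin_prod[of as] as mp(1) by auto
    hence sM: "sum_mset (mset as) = 0" by (simp add: sum_mset_sum_list)
    have P0: "P \<noteq> 0" using coeff_lin_prod[of ls] unfolding Pls by auto
    have dvd: "(\<Prod>a\<leftarrow>as. [:- a, 1:]) dvd P" using fac cpP unfolding B1_def[symmetric] as(1)
      by (metis dvd_triv_left)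
    have sub: "mset as \<subseteq># \<sigma>"
    proof (rule mset_subset_eqI)
      fix x
      have "count (mset as) x = order x (\<Prod>a\<leftarrow>as. [:- a, 1:])" by (simp add: order_lin_list)
      also have "\<dots> \<le> order x P" by (rule dvd_imp_order_le[OF P0 dvd])
      also have "\<dots> = count \<sigma> x" unfolding Pls order_lin_list ls by simp
      finally show "count (mset as) x \<le> count \<sigma> x" .
    qed
    from final_arith[OF k sub[unfolded \<sigma>_def] sM] as(2) mp(1,2) nk show False by simp
  qed
qed

theorem theorem3:
  fixes k n :: nat
  assumes "k \<ge> 2" and "n = 2 * (k + 1)"
  shows "size (sigma_n k) = n \<and> sum_mset (sigma_n k) = 0 \<and> \<not> realizable (sigma_n k)"
  using sigma_size[of k] sigma_sum[of k] not_realizable[OF assms(1)] assms(2) by simp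

end
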